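(* Let $G$ be a stitched 2-ichromatic ordered graph with vertices $v_1<\dots<v_{m+n}$ whose parts are $\{v_1,\ldots,v_m\}$ and $\{v_{m+1},\ldots,v_{m+n}\}$. If $v_1v_{m+n}$ and $v_mv_{m+1}$ are edges of $G$, then $R(G)\ge 5r+1$, where $r=\min(m,n)-1$.
   Context: An ordered graph is a graph together with a specified linear ordering of its vertex set. An ordered graph $G$ is contained in an ordered graph $H$ if there is an order-preserving injection $V(G)\to V(H)$ mapping edges to edges. An interval coloring of an ordered graph is a partition of its vertex set into independent sets each consisting of consecutive vertices (called parts); an ordered graph is 2-ichromatic if its minimum number of parts in an interval coloring is 2. A 2-ichromatic ordered graph is stitched if the four vertices consisting of the first and last vertex of each of the two parts lie in a single connected component. $R(G)$ denotes the 2-color ordered Ramsey number: the minimum $N$ such that every 2-coloring of the edges of the ordered complete graph on $N$ vertices contains a monochromatic copy of $G$. *)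

theory Defs
  imports Main
begin

text \<open>An ordered graph on k vertices is represented with vertex set {0..<k}
  (ordered by the natural order) and a symmetric irreflexive edge relation E
  supported on {0..<k}.\<close>

definition ordered_graph :: "nat \<Rightarrow> (nat \<Rightarrow> nat \<Rightarrow> bool) \<Rightarrow> bool" where
  "ordered_graph k E \<longleftrightarrow>
     (\<forall>x y. E x y \<longrightarrow> x < k \<and> y < k \<and> x \<noteq> y \<and> E y x)"

definition independent :: "(nat \<Rightarrow> nat \<Rightarrow> bool) \<Rightarrow> nat set \<Rightarrow> bool" where
  "independent E S \<longleftrightarrow> (\<forall>x\<in>S. \<forall>y\<in>S. \<not> E x y)"

definition interval_coloring :: "nat \<Rightarrow> (nat \<Rightarrow> nat \<Rightarrow> bool) \<Rightarrow> nat \<Rightarrow> bool" where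
  "interval_coloring k E p \<longleftrightarrow>
     (\<exists>b :: nat \<Rightarrow> nat. b 0 = 0 \<and> b p = k \<and> (\<forall>i<p. b i < b (Suc i)) \<and>
        (\<forall>i<p. independent E {b i..<b (Suc i)}))"

definition ichromatic_number :: "nat \<Rightarrow> (nat \<Rightarrow> nat \<Rightarrow> bool) \<Rightarrow> nat" where
  "ichromatic_number k E = (LEAST p. interval_coloring k E p)"

definition two_ichromatic :: "nat \<Rightarrow> (nat \<Rightarrow> nat \<Rightarrow> bool) \<Rightarrow> bool" where
  "two_ichromatic k E \<longleftrightarrow> ichromatic_number k E = 2"

text \<open>Stitched, for a 2-ichromatic graph with parts {0..<m} and {m..<m+n}:
  the first and last vertices 0, m-1, m, m+n-1 lie in one connected component.\<close>

definition stitched :: "nat \<Rightarrow> nat \<Rightarrow> (nat \<Rightarrow> nat \<Rightarrow> bool) \<Rightarrow> bool" where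
  "stitched m n E \<longleftrightarrow>
     E\<^sup>*\<^sup>* 0 (m - 1) \<and> E\<^sup>*\<^sup>* 0 m \<and> E\<^sup>*\<^sup>* 0 (m + n - 1)"

text \<open>A 2-coloring of the edges of the ordered complete graph on {0..<N}:
  the edge {i,j} with i < j gets colour c i j.\<close>

definition mono_copy ::
  "nat \<Rightarrow> (nat \<Rightarrow> nat \<Rightarrow> bool) \<Rightarrow> nat \<Rightarrow> (nat \<Rightarrow> nat \<Rightarrow> bool) \<Rightarrow> bool \<Rightarrow> bool" where
  "mono_copy k E N c col \<longleftrightarrow>
     (\<exists>f. (\<forall>x<k. f x < N) \<and> (\<forall>x y. x < y \<and> y < k \<longrightarrow> f x < f y) \<and>
          (\<forall>x y. x < y \<and> E x y \<longrightarrow> c (f x) (f y) = col))"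

definition ramsey_arrow :: "nat \<Rightarrow> nat \<Rightarrow> (nat \<Rightarrow> nat \<Rightarrow> bool) \<Rightarrow> bool" where
  "ramsey_arrow N k E \<longleftrightarrow> (\<forall>c. \<exists>col. mono_copy k E N c col)"

definition ordered_ramsey :: "nat \<Rightarrow> (nat \<Rightarrow> nat \<Rightarrow> bool) \<Rightarrow> nat" where
  "ordered_ramsey k E = (LEAST N. ramsey_arrow N k E)"

end

theory Submission
  imports Defs "HOL-Library.Ramsey"
begin

lemma ramsey_exists: assumes og: "ordered_graph k E" shows "\<exists>N. ramsey_arrow N k E"
proof -
  obtain N :: nat where N: "partn_lst {..<N} [k,k] 2" using ramsey_full[of "[k,k]" 2] by blast
  have "ramsey_arrow N k E"
    unfolding ramsey_arrow_def
  proof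
    fix c :: "nat \<Rightarrow> nat \<Rightarrow> bool"
    define F where "F S = (if c (Min S) (Max S) then 0 else 1::nat)" for S
    have Fin: "F \<in> nsets {..<N} 2 \<rightarrow> {..<2}" by (auto simp: F_def)
    obtain i H where i: "i < length [k,k]" and H: "H \<in> nsets {..<N} ([k,k]!i)"
      and FH: "F ` (nsets H 2) \<subseteq> {i}"
      using partn_lstE[OF N Fin] by auto
    have i2: "i < 2" using i by simp
    have Hk: "H \<subseteq> {..<N}" "finite H" "card H = k" using H i2
      by (auto simp: nsets_def less_2_cases_iff)
    define xs where "xs = sorted_list_of_set H"
    have len: "length xs = k" using Hk by (simp add: xs_def)
    have setx: "set xs = H" using Hk by (simp add: xs_def)
    have sw: "sorted_wrt (<) xs" by (simp add: xs_def)
    show "\<exists>col. mono_copy k E N c col"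
      unfolding mono_copy_def
    proof (intro exI[of _ "i = 0"] exI[of _ "\<lambda>x. xs ! x"] conjI allI impI)
      fix x assume "x < k"
      then show "xs ! x < N" using len setx Hk(1) nth_mem by fastforce
    next
      fix x y assume "x < y \<and> y < k"
      then show "xs ! x < xs ! y" using sw len sorted_wrt_nth_less by blast
    next
      fix x y assume a: "x < y \<and> E x y"
      show "c (xs ! x) (xs ! y) = (i = 0)"
      proof -
        have True: "y < k" using og a by (auto simp: ordered_graph_def)
        have lt: "xs ! x < xs ! y" using sw len sorted_wrt_nth_less a True by blast
        have "{xs ! x, xs ! y} \<in> nsets H 2"
          using lt a True len setx nth_mem by (auto simp: nsets_def)
        then have "F {xs ! x, xs ! y} = i" using FH by blast
        moreover have "Min {xs ! x, xs ! y} = xs ! x" "Max {xs ! x, xs ! y} = xs ! y"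
          using lt by auto
        ultimately show ?thesis using i2 by (auto simp: F_def split: if_splits)
      qed
    qed
  qed
  then show ?thesis by blast
qed

lemma incr_gap:
  assumes "\<forall>x y. x < y \<and> y < k \<longrightarrow> (f::nat\<Rightarrow>nat) x < f y" "i \<le> j" "j < k"
  shows "f i + (j - i) \<le> f j"
  using assms(2,3)
proof (induction j)
  case 0 then show ?case by simp
next
  case (Suc j)
  show ?case
  proof (cases "i = Suc j")
    case True then show ?thesis by simp
  next
    case False
    then have "i \<le> j" using Suc by simp
    then have "f i + (j - i) \<le> f j" using Suc by simp
    moreover have "f j < f (Suc j)" using assms(1) Suc by simp
    ultimately show ?thesis using \<open>i \<le> j\<close> by linarith
  qed
qed

lemma div_gap: "x + r \<le> y \<Longrightarrow> (0::nat) < r \<Longrightarrow> x div r < y div r"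
proof -
  assume a: "x + r \<le> y" "0 < r"
  have "(x + r) div r \<le> y div r" using a div_le_mono by blast
  moreover have "(x + r) div r = x div r + 1" using a by simp
  ultimately show ?thesis by simp
qed

definition cc :: "nat \<Rightarrow> nat \<Rightarrow> nat \<Rightarrow> bool" where
  "cc r u w = ((u div r, w div r) \<in> {(0,4),(1,2),(2,3),(1,1),(2,2),(3,3)})"

lemma blue_case:
  assumes "(a::nat) < b" "b \<le> c" "c < d" "d \<le> 4"
    "(a, d) \<notin> {(0,4),(1,2),(2,3),(1,1),(2,2),(3,3)}"
    "(b, c) \<notin> {(0,4),(1,2),(2,3),(1,1),(2,2),(3,3)}"
  shows False
proof -
  have "b = 1 \<and> c = 3" using assms(1-4,6) by simp arith
  then show False using assms by simp
qed

lemma red_case: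
  assumes "(a::nat) < b" "b \<le> c" "c < d"
    "(a, d) \<in> {(0,4),(1,2),(2,3),(1,1),(2,2),(3,3)}"
  shows "a = 0 \<and> d = 4"
  using assms by simp arith

lemma no_arrow:
  fixes m n :: nat and E :: "nat \<Rightarrow> nat \<Rightarrow> bool"
  assumes "m \<ge> 1" and "n \<ge> 1"
    and og: "ordered_graph (m + n) E"
    and iA: "independent E {0..<m}" and iB: "independent E {m..<m + n}"
    and st: "stitched m n E"
    and e1: "E 0 (m + n - 1)" and e2: "E (m - 1) m"
    and N: "N \<le> 5 * (min m n - 1)"
  shows "\<not> ramsey_arrow N (m + n) E"
proof
  define r where "r = min m n - 1"
  assume "ramsey_arrow N (m + n) E"
  then obtain col f where f1: "\<forall>x<m+n. f x < N"
    and f2: "\<forall>x y. x < y \<and> y < m + n \<longrightarrow> f x < f y"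
    and f3: "\<forall>x y. x < y \<and> E x y \<longrightarrow> cc r (f x) (f y) = col"
    unfolding ramsey_arrow_def mono_copy_def by blast
  have "f 0 < N" using f1 assms by auto
  then have r0: "r > 0" using N r_def by (cases "r = 0") auto
  define \<beta> where "\<beta> v = f v div r" for v
  have b4: "\<beta> v \<le> 4" if "v < m + n" for v
  proof -
    have "f v < N" using f1 that by blast
    then have "f v < 5 * r" using N r_def by linarith
    then have "f v div r < 5" by (simp add: less_mult_imp_div_less mult.commute)
    then show ?thesis by (simp add: \<beta>_def)
  qed
  have ab: "\<beta> 0 < \<beta> (m - 1)"
  proof -
    have "f 0 + (m - 1 - 0) \<le> f (m - 1)" using incr_gap[OF f2, of 0 "m-1"] assms(1,2) by simp
    moreover have "r \<le> m - 1" using r_def by simp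
    ultimately show ?thesis unfolding \<beta>_def using div_gap r0 by simp
  qed
  have bc: "\<beta> (m - 1) \<le> \<beta> m"
  proof -
    have "f (m - 1) < f m" using f2[rule_format, of "m-1" m] assms(1,2) by simp
    then show ?thesis unfolding \<beta>_def by (simp add: div_le_mono)
  qed
  have cd: "\<beta> m < \<beta> (m + n - 1)"
  proof -
    have "f m + (m + n - 1 - m) \<le> f (m + n - 1)" using incr_gap[OF f2, of m "m+n-1"] assms(1,2) by simp
    moreover have "r \<le> m + n - 1 - m" using r_def by simp
    ultimately show ?thesis unfolding \<beta>_def using div_gap r0 by simp
  qed
  have d4: "\<beta> (m + n - 1) \<le> 4" using b4[of "m+n-1"] assms(1,2) by simp
  have c1: "cc r (f 0) (f (m + n - 1)) = col" using f3[rule_format, of 0 "m+n-1"] e1 assms(1,2) by simp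
  have c2: "cc r (f (m - 1)) (f m) = col" using f3[rule_format, of "m-1" m] e2 assms(1) by simp
  have ccb: "cc r (f x) (f y) = ((\<beta> x, \<beta> y) \<in> {(0,4),(1,2),(2,3),(1,1),(2,2),(3,3)})" for x y
    unfolding cc_def \<beta>_def by (rule refl)
  show False
  proof (cases col)
    case False
    then show False using blue_case[OF ab bc cd d4] c1 c2 unfolding ccb by blast
  next
    case True
    have "\<beta> 0 = 0" using red_case[OF ab bc cd] c1 True unfolding ccb by blast
    define P where "P v = ((v < m \<and> \<beta> v = 0) \<or> (m \<le> v \<and> \<beta> v = 4))" for v
    have inv: "P v" if "E\<^sup>*\<^sup>* 0 v" for v
      using that
    proof (induction rule: rtranclp_induct)
      case base then show ?case using \<open>\<beta> 0 = 0\<close> assms(1) unfolding P_def by linarith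
    next
      case (step y z)
      have yz: "y < m + n" "z < m + n" "y \<noteq> z" "E z y"
        using og step(2) by (auto simp: ordered_graph_def)
      show ?case
      proof (cases "y < z")
        case True
        have "\<not> (z < m)" using iA step(2) True unfolding independent_def by auto
        moreover have "y < m" using iB step(2) yz True unfolding independent_def by (meson atLeastLessThan_iff not_less order.strict_trans2 less_imp_le)
        moreover have "cc r (f y) (f z)" using f3 step(2) True \<open>col\<close> by blast
        ultimately have "\<beta> y = 0" "(\<beta> y, \<beta> z) \<in> {(0,4),(1,2),(2,3),(1,1),(2,2),(3,3)}"
          using step(3) unfolding ccb P_def by auto
        then have "\<beta> z = 4" by simp
        then show ?thesis using \<open>\<not> z < m\<close> by (simp add: P_def)
      next
        case False
        then have zy: "z < y" using yz by simp
        have "\<not> (y < m)" using iA yz zy unfolding independent_def by auto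
        moreover have "z < m" using iB yz zy unfolding independent_def by (meson atLeastLessThan_iff not_less order.strict_trans2 less_imp_le)
        moreover have "cc r (f z) (f y)" using f3 yz zy \<open>col\<close> by blast
        ultimately have "\<beta> y = 4" "(\<beta> z, \<beta> y) \<in> {(0,4),(1,2),(2,3),(1,1),(2,2),(3,3)}"
          using step(3) unfolding ccb P_def by auto
        then have "\<beta> z = 0" by simp
        then show ?thesis using \<open>z < m\<close> by (simp add: P_def)
      qed
    qed
    have "P (m - 1)" using inv st by (simp add: stitched_def)
    then show False using ab \<open>\<beta> 0 = 0\<close> assms(1) unfolding P_def by linarith
  qed
qed

theorem corollary3p2:
  fixes m n :: nat and E :: "nat \<Rightarrow> nat \<Rightarrow> bool"
  assumes "m \<ge> 1" and "n \<ge> 1"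
    and "ordered_graph (m + n) E"
    and "two_ichromatic (m + n) E"
    and "independent E {0..<m}" and "independent E {m..<m + n}"
    and "stitched m n E"
    and "E 0 (m + n - 1)" and "E (m - 1) m"
  shows "ordered_ramsey (m + n) E \<ge> 5 * (min m n - 1) + 1"
proof -
  obtain N0 where "ramsey_arrow N0 (m + n) E" using ramsey_exists[OF assms(3)] by blast
  then have L: "ramsey_arrow (ordered_ramsey (m + n) E) (m + n) E"
    unfolding ordered_ramsey_def by (rule LeastI)
  show ?thesis
  proof (rule ccontr)
    assume "\<not> ?thesis"
    then have "ordered_ramsey (m + n) E \<le> 5 * (min m n - 1)" by simp
    then show False using no_arrow[OF assms(1,2,3,5,6,7,8,9)] L by blast
  qed
qed

end
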